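(* For the sequences $a_n=n+1$ $(n\ge0)$ and $a_n=(n+1)^2$ $(n\ge0)$, the polynomial $p_n(x)=\sum_{i=0}^n a_ix^i$ has exactly $n\bmod 2$ real roots, counted with multiplicity, for every $n\ge0$ (i.e., no real root if $n$ is even and exactly one if $n$ is odd). *)

theory Defs
  imports "HOL-Computational_Algebra.Polynomial"
begin

definition partial_poly :: "(nat \<Rightarrow> real) \<Rightarrow> nat \<Rightarrow> real poly" where
  "partial_poly a n = (\<Sum>i\<le>n. monom (a i) i)"

text \<open>Number of real roots counted with multiplicity (for nonzero p).\<close>
definition real_root_count :: "real poly \<Rightarrow> nat" where
  "real_root_count p = (\<Sum>x\<in>{x. poly p x = 0}. order x p)"

end

theory Submission
  imports Defs
begin

lemma poly_pp: "poly (partial_poly a n) x = (\<Sum>i\<le>n. a i * x^i)"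
  by (simp add: partial_poly_def poly_sum poly_monom)

lemma pp_pos:
  assumes "\<And>i. a i \<ge> 0" "a 0 > 0" "(x::real) \<ge> 0"
  shows "poly (partial_poly a n) x > 0"
proof -
  have "(\<Sum>i\<le>n. a i * x^i) = a 0 + (\<Sum>i\<in>{1..n}. a i * x^i)"
    by (simp add: atMost_atLeast0 sum.atLeast_Suc_atMost)
  moreover have "(\<Sum>i\<in>{1..n}. a i * x^i) \<ge> 0"
    using assms by (intro sum_nonneg) auto
  ultimately show ?thesis using assms by (simp add: poly_pp)
qed

lemma even_count:
  fixes p :: "real poly" and F :: "real \<Rightarrow> real" and k :: nat
  assumes id: "\<And>x. (1-x)^k * poly p x = F x"
    and nonneg: "\<And>x. x \<ge> 0 \<Longrightarrow> poly p x > 0"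
    and neg: "\<And>x. x < 0 \<Longrightarrow> F x > 0"
  shows "real_root_count p = 0"
proof -
  have "{x. poly p x = 0} = {}"
  proof (safe)
    fix x assume h: "poly p x = 0"
    show "x \<in> {}"
    proof (cases "x \<ge> 0")
      case True then show ?thesis using nonneg[of x] h by simp
    next
      case False then show ?thesis using neg[of x] id[of x] h by simp
    qed
  qed
  then show ?thesis by (simp add: real_root_count_def)
qed

lemma odd_count:
  fixes p :: "real poly" and F F' :: "real \<Rightarrow> real" and k :: nat
  assumes id: "\<And>x. (1-x)^k * poly p x = F x"
    and der: "\<And>x. x < 0 \<Longrightarrow> (F has_real_derivative F' x) (at x)"
    and pos: "\<And>x. x < 0 \<Longrightarrow> F' x > 0"
    and nonneg: "\<And>x. x \<ge> 0 \<Longrightarrow> poly p x > 0"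
    and m1: "F (-1) < 0"
  shows "real_root_count p = 1"
proof -
  have Fdef: "F = (\<lambda>x. (1-x)^k * poly p x)" using id by auto
  have p0: "p \<noteq> 0" using nonneg[of 0] by auto
  have F0: "F 0 > 0" using nonneg[of 0] id[of 0] by simp
  obtain r where r: "-1 \<le> r" "r \<le> 0" "F r = 0"
    using IVT[of F "-1" 0 0] m1 F0 unfolding Fdef by (auto intro!: continuous_intros)
  have rneg: "r < 0" using r F0 by (cases "r = 0") auto
  have pr: "poly p r = 0" using id[of r] r rneg by simp
  have mono: "F a < F b" if ab: "a < b" "b < 0" for a b
  proof (rule DERIV_pos_imp_increasing[OF ab(1)])
    fix x assume "a \<le> x" "x \<le> b"
    then have "x < 0" using ab by linarith
    then show "\<exists>y. (F has_real_derivative y) (at x) \<and> 0 < y" using der pos by blast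
  qed
  have nonr: "s = r" if s: "poly p s = 0" for s
  proof -
    have sneg: "s < 0" using nonneg[of s] s by (cases "s \<ge> 0") auto
    have Fs: "F s = 0" using id[of s] s by simp
    show ?thesis
    proof (rule ccontr)
      assume "s \<noteq> r"
      then consider "s < r" | "r < s" by linarith
      then show False
      proof cases
        case 1 then show False using mono[of s r] rneg Fs r(3) by simp
      next
        case 2 then show False using mono[of r s] sneg Fs r(3) by simp
      qed
    qed
  qed
  have roots: "{x. poly p x = 0} = {r}" using pr nonr by blast
  have D: "((\<lambda>x. (1-x)^k * poly p x) has_real_derivative
      (- (real k * (1-r)^(k-1))) * poly p r + (1-r)^k * poly (pderiv p) r) (at r)"
    apply (rule derivative_eq_intros refl poly_DERIV)+
    apply simp
    done
  have "F' r = (- (real k * (1-r)^(k-1))) * poly p r + (1-r)^k * poly (pderiv p) r"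
    using DERIV_unique[OF der[OF rneg], of "(- (real k * (1-r)^(k-1))) * poly p r + (1-r)^k * poly (pderiv p) r"]
      D Fdef by simp
  then have "F' r = (1-r)^k * poly (pderiv p) r" using pr by simp
  then have "poly (pderiv p) r \<noteq> 0" using pos[OF rneg] by auto
  then have "order r (pderiv p) = 0" using order_root by blast
  then have "order r p = 1" using order_pderiv[OF p0 pr] by simp
  then show ?thesis using roots by (simp add: real_root_count_def)
qed


lemma cf1: "(1-x)^2 * (\<Sum>i\<le>n. (real i + 1) * x^i) = 1 - (real n+2)*x^(n+1) + (real n+1)*x^(n+2)"
  by (induction n) (simp_all add: algebra_simps power2_eq_square)

lemma cf2: "(1-x)^3 * (\<Sum>i\<le>n. (real i + 1)^2 * x^i) = 1 + x - (real n+2)^2*x^(n+1)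
   + (2*(real n)^2+6*real n+3)*x^(n+2) - (real n+1)^2*x^(n+3)"
proof (induction n)
  case 0 then show ?case by (simp add: algebra_simps power2_eq_square power3_eq_cube)
next
  case (Suc n)
  have "(1-x)^3 * (\<Sum>i\<le>Suc n. (real i + 1)^2 * x^i) =
     (1-x)^3 * (\<Sum>i\<le>n. (real i + 1)^2 * x^i) + (1-x)^3 * (real n + 2)^2 * x^(n+1)"
    by (simp add: algebra_simps)
  also have "\<dots> = 1 + x - (real n+2)^2*x^(n+1)
   + (2*(real n)^2+6*real n+3)*x^(n+2) - (real n+1)^2*x^(n+3) + (1-x)^3 * (real n + 2)^2 * x^(n+1)"
    using Suc by simp
  also have "\<dots> = 1 + x - (real (Suc n)+2)^2*x^(Suc n+1)
   + (2*(real (Suc n))^2+6*real (Suc n)+3)*x^(Suc n+2) - (real (Suc n)+1)^2*x^(Suc n+3)"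
    by (simp add: algebra_simps power2_eq_square power3_eq_cube power_add power4_eq_xxxx)
  finally show ?case .
qed

lemma podd: "(x::real) < 0 \<Longrightarrow> odd m \<Longrightarrow> x^m < 0"
  by (simp add: power_less_zero_eq)
lemma peven: "(x::real) < 0 \<Longrightarrow> even m \<Longrightarrow> x^m > 0"
  by (simp add: zero_less_power_eq)

lemma seq1: "real_root_count (partial_poly (\<lambda>i. real i + 1) n) = n mod 2"
proof -
  let ?p = "partial_poly (\<lambda>i. real i + 1) n"
  define F where "F x = 1 - (real n+2)*x^(n+1) + (real n+1)*x^(n+2)" for x :: real
  have id: "(1-x)^2 * poly ?p x = F x" for x
    unfolding poly_pp F_def by (rule cf1)
  have nn: "x \<ge> 0 \<Longrightarrow> poly ?p x > 0" for x by (rule pp_pos) auto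
  show ?thesis
  proof (cases "even n")
    case True
    have "F x > 0" if "x < 0" for x
    proof -
      have a: "x^(n+1) < 0" by (rule podd[OF that]) (use True in simp)
      have b: "x^(n+2) > 0" by (rule peven[OF that]) (use True in simp)
      have "(real n+2)*x^(n+1) < 0" by (rule mult_pos_neg) (use a in auto)
      moreover have "(real n+1)*x^(n+2) > 0" by (rule mult_pos_pos) (use b in auto)
      ultimately show ?thesis unfolding F_def by linarith
    qed
    then show ?thesis using even_count[OF id nn] True by simp
  next
    case False
    define F' where "F' x = (real n+1)*(real n+2)*(x^(n+1) - x^n)" for x :: real
    have der: "(F has_real_derivative F' x) (at x)" for x
      unfolding F_def[abs_def] F'_def
      apply (rule derivative_eq_intros refl)+
      apply (simp add: algebra_simps)
      done
    have pos: "F' x > 0" if "x < 0" for x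
    proof -
      have "x^(n+1) > 0" by (rule peven[OF that]) (use False in simp)
      moreover have "x^n < 0" by (rule podd[OF that]) (use False in simp)
      ultimately show ?thesis unfolding F'_def by simp
    qed
    have m1: "F (-1) < 0" using False unfolding F_def by simp
    show ?thesis using odd_count[OF id der pos nn m1] False by (simp add: odd_iff_mod_2_eq_one)
  qed
qed

lemma seq2: "real_root_count (partial_poly (\<lambda>i. (real i + 1)^2) n) = n mod 2"
proof -
  let ?p = "partial_poly (\<lambda>i. (real i + 1)^2) n"
  define F where "F x = 1 + x - (real n+2)^2*x^(n+1)
   + (2*(real n)^2+6*real n+3)*x^(n+2) - (real n+1)^2*x^(n+3)" for x :: real
  have id: "(1-x)^3 * poly ?p x = F x" for x
    unfolding poly_pp F_def by (rule cf2)
  have nn: "x \<ge> 0 \<Longrightarrow> poly ?p x > 0" for x by (rule pp_pos) auto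
  show ?thesis
  proof (cases "even n")
    case True
    have "F x > 0" if x: "x < 0" for x
    proof -
      have a: "x^(n+1) < 0" by (rule podd[OF that]) (use True in simp)
      have b: "x^(n+2) > 0" by (rule peven[OF that]) (use True in simp)
      have c: "x^(n+3) < 0" by (rule podd[OF that]) (use True in simp)
      have t2: "(2*(real n)^2+6*real n+3)*x^(n+2) \<ge> 0" using b by simp
      have t3: "-((real n+1)^2*x^(n+3)) \<ge> 0"
      proof -
        have "(real n+1)^2*x^(n+3) \<le> 0" using mult_nonneg_nonpos[OF zero_le_power2 less_imp_le[OF c]] by simp
        then show ?thesis by linarith
      qed
      have t1: "-((real n+2)^2*x^(n+1)) > 0" using a
        by (simp add: mult_pos_neg)
      have key: "1 + x - (real n+2)^2*x^(n+1) > 0"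
      proof (cases "x \<ge> -1")
        case True then show ?thesis using t1 by linarith
      next
        case False
        have "x^n = \<bar>x\<bar>^n" using True by (simp add: power_even_abs)
        moreover have "\<bar>x\<bar>^n \<ge> 1" using False by (intro one_le_power) auto
        ultimately have "x^n \<ge> 1" by simp
        then have "x^(n+1) \<le> x" using x by (simp add: mult_le_cancel_left1 mult.commute)
        moreover have K: "(real n+2)^2 \<ge> 4"
        proof -
          have "(2::real)^2 \<le> (real n+2)^2" by (rule power_mono) auto
          then show ?thesis by simp
        qed
        ultimately have "(real n+2)^2*x^(n+1) \<le> (real n+2)^2*x"
          by (intro mult_left_mono) auto
        moreover have "(real n+2)^2*x \<le> 4*x" using K x
          by (intro mult_right_mono_neg) auto
        ultimately have "-((real n+2)^2*x^(n+1)) \<ge> - 4 * x" by linarith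
        then show ?thesis using False by linarith
      qed
      show ?thesis unfolding F_def using key t2 t3 by linarith
    qed
    then show ?thesis using even_count[OF id nn] True by simp
  next
    case False
    define F' where "F' x = 1 - (real n+2)^2*(real n+1)*x^n + (2*(real n)^2+6*real n+3)*(real n+2)*x^(n+1)
       - (real n+1)^2*(real n+3)*x^(n+2)" for x :: real
    have der: "(F has_real_derivative F' x) (at x)" for x
      unfolding F_def[abs_def] F'_def
      apply (rule derivative_eq_intros refl)+
      apply (simp add: algebra_simps)
      done
    have pos: "F' x > 0" if "x < 0" for x
    proof -
      have a: "x^n < 0" by (rule podd[OF that]) (use False in simp)
      have b: "x^(n+1) > 0" by (rule peven[OF that]) (use False in simp)
      have c: "x^(n+2) < 0" by (rule podd[OF that]) (use False in simp)
      have t1: "-((real n+2)^2*(real n+1)*x^n) > 0" using a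
        by (simp add: mult_pos_neg)
      have t2: "(2*(real n)^2+6*real n+3)*(real n+2)*x^(n+1) > 0"
        by (intro mult_pos_pos add_nonneg_pos) (use b in auto)
      have t3: "-((real n+1)^2*(real n+3)*x^(n+2)) > 0" using c
        by (simp add: mult_pos_neg)
      show ?thesis unfolding F'_def using t1 t2 t3 by linarith
    qed
    have m1: "F (-1) < 0"
    proof -
      have "(-1::real)^(n+1) = 1" "(-1::real)^(n+2) = -1" "(-1::real)^(n+3) = 1"
        using False by simp_all
      then have "F (-1) = -((real n+2)^2) - (2*(real n)^2+6*real n+3) - (real n+1)^2"
        unfolding F_def by simp
      moreover have "(real n+2)^2 > 0" "(real n+1)^2 \<ge> 0" "2*(real n)^2+6*real n+3 > 0"
        by (auto intro: add_nonneg_pos)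
      ultimately show ?thesis by linarith
    qed
    show ?thesis using odd_count[OF id der pos nn m1] False by (simp add: odd_iff_mod_2_eq_one)
  qed
qed

theorem mainTheorem5:
  shows "\<forall>n::nat.
     real_root_count (partial_poly (\<lambda>i. real i + 1) n) = n mod 2 \<and>
     real_root_count (partial_poly (\<lambda>i. (real i + 1)^2) n) = n mod 2"
  using seq1 seq2 by blast

end
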